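(* Let $R$ be a commutative ring in which $2$ is invertible and let $Q$ be a free $R$-module of rank $n$ with a fixed ordered basis. Let $\varphi'$ and $\varphi^*$ be invertible symmetric $n\times n$ matrices defining quadratic forms on $Q$ (giving quadratic spaces $Q_{\varphi'}$, $Q_{\varphi^*}$), with $\varphi'=\epsilon^t\varphi^*\epsilon$ for some $\epsilon\in\mathrm{GL}_n(R)$. Let $m\ge1$ and identify automorphisms of $Q\perp\mathbb{H}(R)^m$ with $(n+2m)\times(n+2m)$ matrices via the basis of $Q$ followed by $x_1,\dots,x_m,f_1,\dots,f_m$. Then $\mathrm{EO}_R(Q_{\varphi'},\mathbb{H}(R)^m)=(\epsilon^{-1}\perp I_{2m})\,\mathrm{EO}_R(Q_{\varphi^*},\mathbb{H}(R)^m)\,(\epsilon\perp I_{2m})$.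
   Context: For an invertible symmetric matrix $\varphi$ on $Q$, $\langle a,b\rangle_\varphi=a^t\varphi b$ in coordinates and $q_\varphi(a)=\tfrac12\langle a,a\rangle_\varphi$. $\mathbb{H}(R)^m=\mathbb{H}(P)$ with $P=R^m$, $\mathbb{H}(P)=P\oplus P^*$, basis $x_1,\dots,x_m$ of $P$, dual basis $f_1,\dots,f_m$, form $q(y,g)=g(y)$. DSER transformations on $Q_\varphi\perp\mathbb{H}(P)$: for $R$-linear $\alpha:Q\to P$ let $\alpha^*:P^*\to Q$ satisfy $\langle\alpha^*(g),z\rangle_\varphi=g(\alpha(z))$ for all $z$, and $E_\alpha(z,y,g)=(z-\alpha^*(g),y+\alpha(z)-\tfrac12\alpha\alpha^*(g),g)$; for $\beta:Q\to P^*$ let $\beta^*:P\to Q$ satisfy $\langle\beta^*(y),z\rangle_\varphi=\beta(z)(y)$, and $E^*_\beta(z,y,g)=(z-\beta^*(y),y,g+\beta(z)-\tfrac12\beta\beta^*(y))$. $\mathrm{EO}_R(Q_\varphi,\mathbb{H}(P))$ is the group generated by all $E_\alpha,E^*_\beta$. *)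

theory Defs
  imports "Jordan_Normal_Form.Matrix"
begin

definition half :: "'a::comm_ring_1" where
  "half = (SOME h. 2 * h = 1)"

definition bilin :: "'a::comm_ring_1 mat \<Rightarrow> 'a vec \<Rightarrow> 'a vec \<Rightarrow> 'a" where
  "bilin phi a b = a \<bullet> (phi *\<^sub>v b)"

definition inv_sym_mat :: "nat \<Rightarrow> 'a::comm_ring_1 mat \<Rightarrow> bool" where
  "inv_sym_mat n phi \<longleftrightarrow> phi \<in> carrier_mat n n \<and> transpose_mat phi = phi \<and> invertible_mat phi"

(* coordinates of a vector of Q \<perp> H(P): (z, y, g), z \<in> R^n, y \<in> P = R^m (basis x_i),
   g \<in> P^* (coordinates in the dual basis f_i) *)
definition zpart :: "nat \<Rightarrow> nat \<Rightarrow> 'a vec \<Rightarrow> 'a vec" where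
  "zpart n m v = vec n (\<lambda>i. v $ i)"
definition ypart :: "nat \<Rightarrow> nat \<Rightarrow> 'a vec \<Rightarrow> 'a vec" where
  "ypart n m v = vec m (\<lambda>i. v $ (n + i))"
definition gpart :: "nat \<Rightarrow> nat \<Rightarrow> 'a vec \<Rightarrow> 'a vec" where
  "gpart n m v = vec m (\<lambda>i. v $ (n + m + i))"

definition mat_of_map :: "nat \<Rightarrow> ('a::zero_neq_one vec \<Rightarrow> 'a vec) \<Rightarrow> 'a mat" where
  "mat_of_map N f = mat N N (\<lambda>(i,j). f (unit_vec N j) $ i)"

(* E_alpha, where A is the matrix of alpha : Q \<rightarrow> P and As the matrix of alpha^* : P^* \<rightarrow> Q *)
definition E_map :: "nat \<Rightarrow> nat \<Rightarrow> 'a::comm_ring_1 mat \<Rightarrow> 'a mat \<Rightarrow> 'a vec \<Rightarrow> 'a vec" where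
  "E_map n m A As v =
     (let z = zpart n m v; y = ypart n m v; g = gpart n m v in
      (z - As *\<^sub>v g) @\<^sub>v (y + A *\<^sub>v z - half \<cdot>\<^sub>v (A *\<^sub>v (As *\<^sub>v g))) @\<^sub>v g)"

(* E^*_beta, where B is the matrix of beta : Q \<rightarrow> P^* and Bs the matrix of beta^* : P \<rightarrow> Q *)
definition Estar_map :: "nat \<Rightarrow> nat \<Rightarrow> 'a::comm_ring_1 mat \<Rightarrow> 'a mat \<Rightarrow> 'a vec \<Rightarrow> 'a vec" where
  "Estar_map n m B Bs v =
     (let z = zpart n m v; y = ypart n m v; g = gpart n m v in
      (z - Bs *\<^sub>v y) @\<^sub>v y @\<^sub>v (g + B *\<^sub>v z - half \<cdot>\<^sub>v (B *\<^sub>v (Bs *\<^sub>v y))))"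

definition EO_gens :: "nat \<Rightarrow> nat \<Rightarrow> 'a::comm_ring_1 mat \<Rightarrow> 'a mat set" where
  "EO_gens n m phi =
     {mat_of_map (n + 2*m) (E_map n m A As) | A As.
        A \<in> carrier_mat m n \<and> As \<in> carrier_mat n m \<and>
        (\<forall>g \<in> carrier_vec m. \<forall>z \<in> carrier_vec n. bilin phi (As *\<^sub>v g) z = g \<bullet> (A *\<^sub>v z))}
   \<union> {mat_of_map (n + 2*m) (Estar_map n m B Bs) | B Bs.
        B \<in> carrier_mat m n \<and> Bs \<in> carrier_mat n m \<and>
        (\<forall>y \<in> carrier_vec m. \<forall>z \<in> carrier_vec n. bilin phi (Bs *\<^sub>v y) z = (B *\<^sub>v z) \<bullet> y)}"

inductive_set EO :: "nat \<Rightarrow> nat \<Rightarrow> 'a::comm_ring_1 mat \<Rightarrow> 'a mat set"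
  for n m :: nat and phi :: "'a mat" where
  EO_one: "1\<^sub>m (n + 2*m) \<in> EO n m phi"
| EO_gen: "M \<in> EO_gens n m phi \<Longrightarrow> M \<in> EO n m phi"
| EO_mult: "M \<in> EO n m phi \<Longrightarrow> N \<in> EO n m phi \<Longrightarrow> M * N \<in> EO n m phi"
| EO_inv: "M \<in> EO n m phi \<Longrightarrow> N \<in> carrier_mat (n + 2*m) (n + 2*m) \<Longrightarrow>
           M * N = 1\<^sub>m (n + 2*m) \<Longrightarrow> N * M = 1\<^sub>m (n + 2*m) \<Longrightarrow> N \<in> EO n m phi"

definition bdiag_id :: "nat \<Rightarrow> nat \<Rightarrow> 'a::comm_ring_1 mat \<Rightarrow> 'a mat" where
  "bdiag_id n m A = four_block_mat A (0\<^sub>m n (2*m)) (0\<^sub>m (2*m) n) (1\<^sub>m (2*m))"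

end

theory Submission
  imports Defs
begin

lemma mmv_smult:
  assumes "(A::'a::comm_ring_1 mat) \<in> carrier_mat nr nc" "v \<in> carrier_vec nc"
  shows "A *\<^sub>v (k \<cdot>\<^sub>v v) = k \<cdot>\<^sub>v (A *\<^sub>v v)"
  using assms by (intro eq_vecI) (auto simp: scalar_prod_smult_right)

lemma parts_carrier[simp]:
  "zpart n m v \<in> carrier_vec n" "ypart n m v \<in> carrier_vec m" "gpart n m v \<in> carrier_vec m"
  by (auto simp: zpart_def ypart_def gpart_def)

lemma parts_dim[simp]:
  "dim_vec (zpart n m v) = n" "dim_vec (ypart n m v) = m" "dim_vec (gpart n m v) = m"
  by (auto simp: zpart_def ypart_def gpart_def)

lemma split_vec:
  assumes "v \<in> carrier_vec (n + 2*m)"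
  shows "v = zpart n m v @\<^sub>v (ypart n m v @\<^sub>v gpart n m v)"
  using assms
  by (intro eq_vecI) (auto simp: zpart_def ypart_def gpart_def)

lemma parts_append[simp]:
  assumes "a \<in> carrier_vec n" "b \<in> carrier_vec m" "c \<in> carrier_vec m"
  shows "zpart n m (a @\<^sub>v b @\<^sub>v c) = a" "ypart n m (a @\<^sub>v b @\<^sub>v c) = b"
        "gpart n m (a @\<^sub>v b @\<^sub>v c) = c"
  using assms by (auto intro!: eq_vecI simp: zpart_def ypart_def gpart_def)

lemma parts_add:
  assumes "v \<in> carrier_vec (n + 2*m)" "w \<in> carrier_vec (n + 2*m)"
  shows "zpart n m (v + w) = zpart n m v + zpart n m w"
    "ypart n m (v + w) = ypart n m v + ypart n m w"
    "gpart n m (v + w) = gpart n m v + gpart n m w"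
  using assms by (auto intro!: eq_vecI simp: zpart_def ypart_def gpart_def)

lemma parts_smult:
  assumes "v \<in> carrier_vec (n + 2*m)"
  shows "zpart n m (c \<cdot>\<^sub>v v) = c \<cdot>\<^sub>v zpart n m v"
    "ypart n m (c \<cdot>\<^sub>v v) = c \<cdot>\<^sub>v ypart n m v"
    "gpart n m (c \<cdot>\<^sub>v v) = c \<cdot>\<^sub>v gpart n m v"
  using assms by (auto intro!: eq_vecI simp: zpart_def ypart_def gpart_def)

lemma D_carrier[simp]: "e \<in> carrier_mat n n \<Longrightarrow> bdiag_id n m e \<in> carrier_mat (n + 2*m) (n + 2*m)"
  unfolding bdiag_id_def by (metis four_block_carrier_mat one_carrier_mat)

lemma D_mult_vec:
  assumes e: "e \<in> carrier_mat n n" and v: "v \<in> carrier_vec (n + 2*m)"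
  shows "bdiag_id n m e *\<^sub>v v = (e *\<^sub>v zpart n m v) @\<^sub>v (ypart n m v @\<^sub>v gpart n m v)"
proof -
  have w: "ypart n m v @\<^sub>v gpart n m v \<in> carrier_vec (2*m)"
    using append_carrier_vec[OF parts_carrier(2,3)] by (simp add: mult_2)
  have "bdiag_id n m e *\<^sub>v v = bdiag_id n m e *\<^sub>v (zpart n m v @\<^sub>v (ypart n m v @\<^sub>v gpart n m v))"
    using split_vec[OF v] by simp
  also have "\<dots> = (e *\<^sub>v zpart n m v) @\<^sub>v (1\<^sub>m (2*m) *\<^sub>v (ypart n m v @\<^sub>v gpart n m v))"
    unfolding bdiag_id_def by (rule mult_mat_vec_split[OF e one_carrier_mat parts_carrier(1) w])
  finally show ?thesis using w by simp
qed

lemma D_mult: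
  assumes "a \<in> carrier_mat n n" "b \<in> carrier_mat n n"
  shows "bdiag_id n m a * bdiag_id n m b = bdiag_id n m (a * b)"
  unfolding bdiag_id_def
  by (subst mult_four_block_mat[OF assms(1) zero_carrier_mat zero_carrier_mat one_carrier_mat
       assms(2) zero_carrier_mat zero_carrier_mat one_carrier_mat]) (use assms in auto)

lemma D_one: "bdiag_id n m (1\<^sub>m n) = 1\<^sub>m (n + 2*m)"
  unfolding bdiag_id_def by simp

lemma mat_of_map_eqI:
  fixes X :: "'a::comm_ring_1 mat"
  assumes X: "X \<in> carrier_mat N N" and f: "\<And>v. v \<in> carrier_vec N \<Longrightarrow> X *\<^sub>v v = f v"
  shows "X = mat_of_map N f"
proof (rule eq_matI)
  fix i j assume i: "i < dim_row (mat_of_map N f)" and j: "j < dim_col (mat_of_map N f)"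
  have "X $$ (i,j) = (X *\<^sub>v unit_vec N j) $ i" using X i j by (simp add: mat_of_map_def)
  also have "\<dots> = f (unit_vec N j) $ i" using f[of "unit_vec N j"] by simp
  finally show "X $$ (i,j) = mat_of_map N f $$ (i,j)" using i j by (simp add: mat_of_map_def)
qed (use X in \<open>auto simp: mat_of_map_def\<close>)

lemma mat_of_map_linear:
  fixes f :: "'a::comm_ring_1 vec \<Rightarrow> 'a vec"
  assumes add: "\<And>v w. v \<in> carrier_vec N \<Longrightarrow> w \<in> carrier_vec N \<Longrightarrow> f (v + w) = f v + f w"
    and sm: "\<And>c v. v \<in> carrier_vec N \<Longrightarrow> f (c \<cdot>\<^sub>v v) = c \<cdot>\<^sub>v f v"
    and car: "\<And>v. v \<in> carrier_vec N \<Longrightarrow> f v \<in> carrier_vec N"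
    and v: "v \<in> carrier_vec N"
  shows "mat_of_map N f *\<^sub>v v = f v"
proof -
  define u where "u k = vec N (\<lambda>i. if i < k then v $ i else 0)" for k
  have u_car: "u k \<in> carrier_vec N" for k by (simp add: u_def)
  have claim: "k \<le> N \<Longrightarrow> f (u k) = vec N (\<lambda>i. \<Sum>j\<in>{0..<k}. f (unit_vec N j) $ i * v $ j)" for k
  proof (induction k)
    case 0
    have "u 0 = 0 \<cdot>\<^sub>v (0\<^sub>v N)" by (auto simp: u_def)
    hence "f (u 0) = 0 \<cdot>\<^sub>v f (0\<^sub>v N)" using sm[of "0\<^sub>v N" 0] by simp
    also have "\<dots> = 0\<^sub>v N" using car[of "0\<^sub>v N"] by (auto intro!: eq_vecI)
    finally show ?case by (auto intro!: eq_vecI)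
  next
    case (Suc k)
    have "u (Suc k) = u k + v $ k \<cdot>\<^sub>v unit_vec N k"
      using Suc.prems by (auto intro!: eq_vecI simp: u_def less_Suc_eq)
    hence "f (u (Suc k)) = f (u k) + v $ k \<cdot>\<^sub>v f (unit_vec N k)"
      using add[OF u_car, of "v $ k \<cdot>\<^sub>v unit_vec N k"] sm[of "unit_vec N k" "v $ k"] by simp
    also have "\<dots> = vec N (\<lambda>i. \<Sum>j\<in>{0..<Suc k}. f (unit_vec N j) $ i * v $ j)"
      using Suc car[of "unit_vec N k"] by (auto intro!: eq_vecI simp: mult.commute)
    finally show ?case .
  qed
  have "u N = v" using v by (auto intro!: eq_vecI simp: u_def)
  hence "f v = vec N (\<lambda>i. \<Sum>j\<in>{0..<N}. f (unit_vec N j) $ i * v $ j)" using claim[of N] by simp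
  also have "\<dots> = mat_of_map N f *\<^sub>v v"
    using v by (auto intro!: eq_vecI simp: mat_of_map_def scalar_prod_def row_def)
  finally show ?thesis by simp
qed


lemma E_carrier:
  assumes "A \<in> carrier_mat m n" "As \<in> carrier_mat n m"
  shows "E_map n m A As v \<in> carrier_vec (n + 2*m)"
  using assms unfolding E_map_def Let_def mult_2
  by (intro append_carrier_vec) auto

lemma Es_carrier:
  assumes "B \<in> carrier_mat m n" "Bs \<in> carrier_mat n m"
  shows "Estar_map n m B Bs v \<in> carrier_vec (n + 2*m)"
  using assms unfolding Estar_map_def Let_def mult_2
  by (intro append_carrier_vec) auto

lemma app3_add:
  assumes "a \<in> carrier_vec n" "a' \<in> carrier_vec n" "b \<in> carrier_vec m" "b' \<in> carrier_vec m"
    "c \<in> carrier_vec k" "c' \<in> carrier_vec k"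
  shows "(a @\<^sub>v b @\<^sub>v c) + (a' @\<^sub>v b' @\<^sub>v c') = (a + a') @\<^sub>v (b + b') @\<^sub>v (c + c')"
  using assms by (simp add: append_vec_add[of _ n _ _ "m+k"] append_vec_add[of _ m _ _ k])

lemma app3_smult:
  shows "x \<cdot>\<^sub>v (a @\<^sub>v b @\<^sub>v c) = (x \<cdot>\<^sub>v a) @\<^sub>v (x \<cdot>\<^sub>v b) @\<^sub>v (x \<cdot>\<^sub>v c)"
  by (auto intro!: eq_vecI)

lemma E_add:
  assumes A: "A \<in> carrier_mat m n" and As: "As \<in> carrier_mat n m"
    and v: "v \<in> carrier_vec (n + 2*m)" and w: "w \<in> carrier_vec (n + 2*m)"
  shows "E_map n m A As (v + w) = E_map n m A As v + E_map n m A As w"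
proof -
  note pc = parts_carrier[of n m v] parts_carrier[of n m w]
  show ?thesis
    unfolding E_map_def Let_def parts_add[OF v w]
    using A As pc
    apply (simp add: mult_add_distrib_mat_vec[OF As] mult_add_distrib_mat_vec[OF A]
        mult_add_distrib_mat_vec[OF A mult_mat_vec_carrier[OF As] mult_mat_vec_carrier[OF As]])
    apply (subst app3_add[of _ n _ _ m _ _ m], auto)
    apply (intro arg_cong2[where f=append_vec])
    apply (auto intro!: eq_vecI simp: algebra_simps)
    done
qed


lemma E_smult:
  assumes A: "A \<in> carrier_mat m n" and As: "As \<in> carrier_mat n m"
    and v: "v \<in> carrier_vec (n + 2*m)"
  shows "E_map n m A As (c \<cdot>\<^sub>v v) = c \<cdot>\<^sub>v E_map n m A As v"
  unfolding E_map_def Let_def parts_smult[OF v] app3_smult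
  using A As
  apply (simp add: mmv_smult[OF As] mmv_smult[OF A] mmv_smult[OF A mult_mat_vec_carrier[OF As]])
  apply (intro arg_cong2[where f=append_vec])
  apply (auto intro!: eq_vecI simp: algebra_simps)
  done

lemma Es_add:
  assumes A: "A \<in> carrier_mat m n" and As: "As \<in> carrier_mat n m"
    and v: "v \<in> carrier_vec (n + 2*m)" and w: "w \<in> carrier_vec (n + 2*m)"
  shows "Estar_map n m A As (v + w) = Estar_map n m A As v + Estar_map n m A As w"
proof -
  note pc = parts_carrier[of n m v] parts_carrier[of n m w]
  show ?thesis
    unfolding Estar_map_def Let_def parts_add[OF v w]
    using A As pc
    apply (simp add: mult_add_distrib_mat_vec[OF As] mult_add_distrib_mat_vec[OF A]
        mult_add_distrib_mat_vec[OF A mult_mat_vec_carrier[OF As] mult_mat_vec_carrier[OF As]])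
    apply (subst app3_add[of _ n _ _ m _ _ m], auto)
    apply (intro arg_cong2[where f=append_vec])
    apply (auto intro!: eq_vecI simp: algebra_simps)
    done
qed

lemma Es_smult:
  assumes A: "A \<in> carrier_mat m n" and As: "As \<in> carrier_mat n m"
    and v: "v \<in> carrier_vec (n + 2*m)"
  shows "Estar_map n m A As (c \<cdot>\<^sub>v v) = c \<cdot>\<^sub>v Estar_map n m A As v"
  unfolding Estar_map_def Let_def parts_smult[OF v] app3_smult
  using A As
  apply (simp add: mmv_smult[OF As] mmv_smult[OF A] mmv_smult[OF A mult_mat_vec_carrier[OF As]])
  apply (intro arg_cong2[where f=append_vec])
  apply (auto intro!: eq_vecI simp: algebra_simps)
  done

lemma E_conj_vec:
  assumes A: "A \<in> carrier_mat m n" and As: "As \<in> carrier_mat n m"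
    and e: "e \<in> carrier_mat n n" and ei: "ei \<in> carrier_mat n n" and inv: "ei * e = 1\<^sub>m n" and inv2: "e * ei = 1\<^sub>m n"
    and v: "v \<in> carrier_vec (n + 2*m)"
  shows "bdiag_id n m ei *\<^sub>v E_map n m A As (bdiag_id n m e *\<^sub>v v) = E_map n m (A * e) (ei * As) v"
proof -
  note pc = parts_carrier[of n m v]
  have ez: "e *\<^sub>v zpart n m v \<in> carrier_vec n" using e by simp
  have 1: "E_map n m A As (bdiag_id n m e *\<^sub>v v) =
     (e *\<^sub>v zpart n m v - As *\<^sub>v gpart n m v) @\<^sub>v
     (ypart n m v + A *\<^sub>v (e *\<^sub>v zpart n m v) - half \<cdot>\<^sub>v (A *\<^sub>v (As *\<^sub>v gpart n m v))) @\<^sub>v gpart n m v"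
    unfolding D_mult_vec[OF e v] E_map_def Let_def parts_append[OF ez pc(2,3)] ..
  have c1: "e *\<^sub>v zpart n m v - As *\<^sub>v gpart n m v \<in> carrier_vec n" using e As by auto
  have c2: "(ypart n m v + A *\<^sub>v (e *\<^sub>v zpart n m v) - half \<cdot>\<^sub>v (A *\<^sub>v (As *\<^sub>v gpart n m v))) @\<^sub>v gpart n m v
     \<in> carrier_vec (m + m)" using A As e by auto
  have 2: "ei *\<^sub>v (e *\<^sub>v zpart n m v - As *\<^sub>v gpart n m v) = zpart n m v - (ei * As) *\<^sub>v gpart n m v"
  proof -
    have "ei *\<^sub>v (e *\<^sub>v zpart n m v - As *\<^sub>v gpart n m v) = ei *\<^sub>v (e *\<^sub>v zpart n m v) - ei *\<^sub>v (As *\<^sub>v gpart n m v)"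
      using ei e As by (simp add: mult_minus_distrib_mat_vec[OF ei])
    also have "ei *\<^sub>v (e *\<^sub>v zpart n m v) = zpart n m v"
      using assoc_mult_mat_vec[OF ei e pc(1)] inv by simp
    finally show ?thesis using ei As by simp
  qed
  have 3: "A *\<^sub>v (e *\<^sub>v zpart n m v) = (A * e) *\<^sub>v zpart n m v" using A e by simp
  have 4: "A *\<^sub>v (As *\<^sub>v gpart n m v) = (A * e) *\<^sub>v ((ei * As) *\<^sub>v gpart n m v)"
  proof -
    have "(A * e) *\<^sub>v ((ei * As) *\<^sub>v gpart n m v) = A *\<^sub>v (e *\<^sub>v (ei *\<^sub>v (As *\<^sub>v gpart n m v)))"
      using A e ei As by simp
    also have "e *\<^sub>v (ei *\<^sub>v (As *\<^sub>v gpart n m v)) = ((e * ei) *\<^sub>v (As *\<^sub>v gpart n m v))"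
      using e ei As by simp
    finally show ?thesis using As inv2 by simp
  qed
  have "bdiag_id n m ei *\<^sub>v E_map n m A As (bdiag_id n m e *\<^sub>v v) =
     (ei *\<^sub>v (e *\<^sub>v zpart n m v - As *\<^sub>v gpart n m v)) @\<^sub>v (1\<^sub>m (2*m) *\<^sub>v
     ((ypart n m v + A *\<^sub>v (e *\<^sub>v zpart n m v) - half \<cdot>\<^sub>v (A *\<^sub>v (As *\<^sub>v gpart n m v))) @\<^sub>v gpart n m v))"
    unfolding 1 unfolding bdiag_id_def
    by (rule mult_mat_vec_split[OF ei one_carrier_mat c1]) (use c2 in \<open>simp add: mult_2\<close>)
  also have "\<dots> = E_map n m (A * e) (ei * As) v"
    using c2 unfolding 2 E_map_def Let_def 3 4 by (simp add: mult_2)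
  finally show ?thesis .
qed


lemma Es_conj_vec:
  assumes A: "A \<in> carrier_mat m n" and As: "As \<in> carrier_mat n m"
    and e: "e \<in> carrier_mat n n" and ei: "ei \<in> carrier_mat n n" and inv: "ei * e = 1\<^sub>m n" and inv2: "e * ei = 1\<^sub>m n"
    and v: "v \<in> carrier_vec (n + 2*m)"
  shows "bdiag_id n m ei *\<^sub>v Estar_map n m A As (bdiag_id n m e *\<^sub>v v) = Estar_map n m (A * e) (ei * As) v"
proof -
  note pc = parts_carrier[of n m v]
  have ez: "e *\<^sub>v zpart n m v \<in> carrier_vec n" using e by simp
  have 1: "Estar_map n m A As (bdiag_id n m e *\<^sub>v v) =
     (e *\<^sub>v zpart n m v - As *\<^sub>v ypart n m v) @\<^sub>v ypart n m v @\<^sub>v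
     (gpart n m v + A *\<^sub>v (e *\<^sub>v zpart n m v) - half \<cdot>\<^sub>v (A *\<^sub>v (As *\<^sub>v ypart n m v)))"
    unfolding D_mult_vec[OF e v] Estar_map_def Let_def parts_append[OF ez pc(2,3)] ..
  have c1: "e *\<^sub>v zpart n m v - As *\<^sub>v ypart n m v \<in> carrier_vec n" using e As by auto
  have c2: "ypart n m v @\<^sub>v (gpart n m v + A *\<^sub>v (e *\<^sub>v zpart n m v) - half \<cdot>\<^sub>v (A *\<^sub>v (As *\<^sub>v ypart n m v)))
     \<in> carrier_vec (m + m)" using A As e by auto
  have 2: "ei *\<^sub>v (e *\<^sub>v zpart n m v - As *\<^sub>v ypart n m v) = zpart n m v - (ei * As) *\<^sub>v ypart n m v"
  proof -
    have "ei *\<^sub>v (e *\<^sub>v zpart n m v - As *\<^sub>v ypart n m v) = ei *\<^sub>v (e *\<^sub>v zpart n m v) - ei *\<^sub>v (As *\<^sub>v ypart n m v)"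
      using ei e As by (simp add: mult_minus_distrib_mat_vec[OF ei])
    also have "ei *\<^sub>v (e *\<^sub>v zpart n m v) = zpart n m v"
      using assoc_mult_mat_vec[OF ei e pc(1)] inv by simp
    finally show ?thesis using ei As by simp
  qed
  have 3: "A *\<^sub>v (e *\<^sub>v zpart n m v) = (A * e) *\<^sub>v zpart n m v" using A e by simp
  have 4: "A *\<^sub>v (As *\<^sub>v ypart n m v) = (A * e) *\<^sub>v ((ei * As) *\<^sub>v ypart n m v)"
  proof -
    have "(A * e) *\<^sub>v ((ei * As) *\<^sub>v ypart n m v) = A *\<^sub>v (e *\<^sub>v (ei *\<^sub>v (As *\<^sub>v ypart n m v)))"
      using A e ei As by simp
    also have "e *\<^sub>v (ei *\<^sub>v (As *\<^sub>v ypart n m v)) = ((e * ei) *\<^sub>v (As *\<^sub>v ypart n m v))"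
      using e ei As by simp
    finally show ?thesis using As inv2 by simp
  qed
  have "bdiag_id n m ei *\<^sub>v Estar_map n m A As (bdiag_id n m e *\<^sub>v v) =
     (ei *\<^sub>v (e *\<^sub>v zpart n m v - As *\<^sub>v ypart n m v)) @\<^sub>v (1\<^sub>m (2*m) *\<^sub>v
     (ypart n m v @\<^sub>v (gpart n m v + A *\<^sub>v (e *\<^sub>v zpart n m v) - half \<cdot>\<^sub>v (A *\<^sub>v (As *\<^sub>v ypart n m v)))))"
    unfolding 1 unfolding bdiag_id_def
    by (rule mult_mat_vec_split[OF ei one_carrier_mat c1]) (use c2 in \<open>simp add: mult_2\<close>)
  also have "\<dots> = Estar_map n m (A * e) (ei * As) v"
    using c2 unfolding 2 Estar_map_def Let_def 3 4 by (simp add: mult_2)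
  finally show ?thesis .
qed

lemma bilin_conj:
  assumes phis: "phis \<in> carrier_mat n n" and phi': "phi' = transpose_mat e * phis * e"
    and e: "e \<in> carrier_mat n n" and ei: "ei \<in> carrier_mat n n" and inv2: "e * ei = 1\<^sub>m n"
    and a: "a \<in> carrier_vec n" and z: "z \<in> carrier_vec n"
  shows "bilin phi' (ei *\<^sub>v a) z = bilin phis a (e *\<^sub>v z)"
proof -
  have w: "phis *\<^sub>v (e *\<^sub>v z) \<in> carrier_vec n" using phis e z by simp
  have eia: "ei *\<^sub>v a \<in> carrier_vec n" using ei a by simp
  have "phi' *\<^sub>v z = transpose_mat e *\<^sub>v (phis *\<^sub>v (e *\<^sub>v z))"
    using phi' phis e z
    by (simp add: assoc_mult_mat_vec[of _ n n _ n] assoc_mult_mat_vec[OF phis e z])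
  hence "bilin phi' (ei *\<^sub>v a) z = (ei *\<^sub>v a) \<bullet> (transpose_mat e *\<^sub>v (phis *\<^sub>v (e *\<^sub>v z)))"
    by (simp add: bilin_def)
  also have "\<dots> = (transpose_mat e *\<^sub>v (phis *\<^sub>v (e *\<^sub>v z))) \<bullet> (ei *\<^sub>v a)"
    by (rule comm_scalar_prod[of _ n]) (use eia e w in auto)
  also have "\<dots> = (phis *\<^sub>v (e *\<^sub>v z)) \<bullet> (e *\<^sub>v (ei *\<^sub>v a))"
    by (rule transpose_vec_mult_scalar[OF e eia w])
  also have "e *\<^sub>v (ei *\<^sub>v a) = a" using e ei a inv2 by (metis assoc_mult_mat_vec one_mult_mat_vec)
  also have "(phis *\<^sub>v (e *\<^sub>v z)) \<bullet> a = a \<bullet> (phis *\<^sub>v (e *\<^sub>v z))"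
    by (rule comm_scalar_prod[of _ n]) (use a w in auto)
  finally show ?thesis by (simp add: bilin_def)
qed


lemma mat_of_map_carrier[simp]: "mat_of_map N f \<in> carrier_mat N N"
  by (simp add: mat_of_map_def)

lemma conj_mult_vec:
  assumes e: "e \<in> carrier_mat n n" and ei: "ei \<in> carrier_mat n n"
    and M: "M \<in> carrier_mat (n + 2*m) (n + 2*m)" and v: "v \<in> carrier_vec (n + 2*m)"
  shows "(bdiag_id n m ei * M * bdiag_id n m e) *\<^sub>v v = bdiag_id n m ei *\<^sub>v (M *\<^sub>v (bdiag_id n m e *\<^sub>v v))"
proof -
  note De = D_carrier[OF e, of m] and Dei = D_carrier[OF ei, of m]
  have "(bdiag_id n m ei * M * bdiag_id n m e) *\<^sub>v v = (bdiag_id n m ei * M) *\<^sub>v (bdiag_id n m e *\<^sub>v v)"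
    by (rule assoc_mult_mat_vec[OF mult_carrier_mat[OF Dei M] De v])
  also have "\<dots> = bdiag_id n m ei *\<^sub>v (M *\<^sub>v (bdiag_id n m e *\<^sub>v v))"
    by (rule assoc_mult_mat_vec[OF Dei M mult_mat_vec_carrier[OF De v]])
  finally show ?thesis .
qed

lemma gen_conj:
  fixes phis :: "'a::comm_ring_1 mat"
  assumes phis: "phis \<in> carrier_mat n n" and phi': "phi' = transpose_mat e * phis * e"
    and e: "e \<in> carrier_mat n n" and ei: "ei \<in> carrier_mat n n"
    and inv: "ei * e = 1\<^sub>m n" and inv2: "e * ei = 1\<^sub>m n"
    and M: "M \<in> EO_gens n m phis"
  shows "bdiag_id n m ei * M * bdiag_id n m e \<in> EO_gens n m phi'"
proof -
  let ?N = "n + 2*m"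
  from M consider
    (E) A As where "M = mat_of_map ?N (E_map n m A As)" "A \<in> carrier_mat m n" "As \<in> carrier_mat n m"
      "\<forall>g \<in> carrier_vec m. \<forall>z \<in> carrier_vec n. bilin phis (As *\<^sub>v g) z = g \<bullet> (A *\<^sub>v z)"
  | (S) B Bs where "M = mat_of_map ?N (Estar_map n m B Bs)" "B \<in> carrier_mat m n" "Bs \<in> carrier_mat n m"
      "\<forall>y \<in> carrier_vec m. \<forall>z \<in> carrier_vec n. bilin phis (Bs *\<^sub>v y) z = (B *\<^sub>v z) \<bullet> y"
    unfolding EO_gens_def by blast
  then show ?thesis
  proof cases
    case E
    have X: "bdiag_id n m ei * M * bdiag_id n m e = mat_of_map ?N (E_map n m (A * e) (ei * As))"
    proof (rule mat_of_map_eqI)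
      show "bdiag_id n m ei * M * bdiag_id n m e \<in> carrier_mat ?N ?N"
        unfolding E(1) by (rule mult_carrier_mat[OF mult_carrier_mat[OF D_carrier[OF ei] mat_of_map_carrier] D_carrier[OF e]])
      fix v :: "'a vec" assume v: "v \<in> carrier_vec ?N"
      have Dv: "bdiag_id n m e *\<^sub>v v \<in> carrier_vec ?N" using D_carrier[OF e, of m] v by simp
      have "M *\<^sub>v (bdiag_id n m e *\<^sub>v v) = E_map n m A As (bdiag_id n m e *\<^sub>v v)"
        unfolding E(1)
        by (rule mat_of_map_linear[OF E_add[OF E(2,3)] E_smult[OF E(2,3)] E_carrier[OF E(2,3)] Dv])
      then show "(bdiag_id n m ei * M * bdiag_id n m e) *\<^sub>v v = E_map n m (A * e) (ei * As) v"
        using conj_mult_vec[OF e ei _ v, of M] E(1) E_conj_vec[OF E(2,3) e ei inv inv2 v] by simp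
    qed
    have cond: "\<forall>g \<in> carrier_vec m. \<forall>z \<in> carrier_vec n. bilin phi' ((ei * As) *\<^sub>v g) z = g \<bullet> ((A * e) *\<^sub>v z)"
    proof (intro ballI)
      fix g z :: "'a vec" assume g: "g \<in> carrier_vec m" and z: "z \<in> carrier_vec n"
      have "bilin phi' ((ei * As) *\<^sub>v g) z = bilin phi' (ei *\<^sub>v (As *\<^sub>v g)) z" using ei E(3) g by simp
      also have "\<dots> = bilin phis (As *\<^sub>v g) (e *\<^sub>v z)"
        by (rule bilin_conj[OF phis phi' e ei inv2]) (use E(3) g e z in auto)
      also have "\<dots> = g \<bullet> (A *\<^sub>v (e *\<^sub>v z))" using E(4) g e z by simp
      finally show "bilin phi' ((ei * As) *\<^sub>v g) z = g \<bullet> ((A * e) *\<^sub>v z)" using E(2) e z by simp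
    qed
    show ?thesis unfolding X EO_gens_def
      by (rule UnI1, rule CollectI, rule exI[of _ "A * e"], rule exI[of _ "ei * As"])
        (use cond E(2,3) e ei in simp)
  next
    case S
    have X: "bdiag_id n m ei * M * bdiag_id n m e = mat_of_map ?N (Estar_map n m (B * e) (ei * Bs))"
    proof (rule mat_of_map_eqI)
      show "bdiag_id n m ei * M * bdiag_id n m e \<in> carrier_mat ?N ?N"
        unfolding S(1) by (rule mult_carrier_mat[OF mult_carrier_mat[OF D_carrier[OF ei] mat_of_map_carrier] D_carrier[OF e]])
      fix v :: "'a vec" assume v: "v \<in> carrier_vec ?N"
      have Dv: "bdiag_id n m e *\<^sub>v v \<in> carrier_vec ?N" using D_carrier[OF e, of m] v by simp
      have "M *\<^sub>v (bdiag_id n m e *\<^sub>v v) = Estar_map n m B Bs (bdiag_id n m e *\<^sub>v v)"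
        unfolding S(1)
        by (rule mat_of_map_linear[OF Es_add[OF S(2,3)] Es_smult[OF S(2,3)] Es_carrier[OF S(2,3)] Dv])
      then show "(bdiag_id n m ei * M * bdiag_id n m e) *\<^sub>v v = Estar_map n m (B * e) (ei * Bs) v"
        using conj_mult_vec[OF e ei _ v, of M] S(1) Es_conj_vec[OF S(2,3) e ei inv inv2 v] by simp
    qed
    have cond: "\<forall>y \<in> carrier_vec m. \<forall>z \<in> carrier_vec n. bilin phi' ((ei * Bs) *\<^sub>v y) z = ((B * e) *\<^sub>v z) \<bullet> y"
    proof (intro ballI)
      fix y z :: "'a vec" assume g: "y \<in> carrier_vec m" and z: "z \<in> carrier_vec n"
      have "bilin phi' ((ei * Bs) *\<^sub>v y) z = bilin phi' (ei *\<^sub>v (Bs *\<^sub>v y)) z" using ei S(3) g by simp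
      also have "\<dots> = bilin phis (Bs *\<^sub>v y) (e *\<^sub>v z)"
        by (rule bilin_conj[OF phis phi' e ei inv2]) (use S(3) g e z in auto)
      also have "\<dots> = (B *\<^sub>v (e *\<^sub>v z)) \<bullet> y" using S(4) g e z by simp
      finally show "bilin phi' ((ei * Bs) *\<^sub>v y) z = ((B * e) *\<^sub>v z) \<bullet> y" using S(2) e z by simp
    qed
    show ?thesis unfolding X EO_gens_def
      by (rule UnI2, rule CollectI, rule exI[of _ "B * e"], rule exI[of _ "ei * Bs"])
        (use cond S(2,3) e ei in simp)
  qed
qed


lemma EO_carrier: "M \<in> EO n m phi \<Longrightarrow> M \<in> carrier_mat (n + 2*m) (n + 2*m)"
  by (induction rule: EO.induct) (auto simp: EO_gens_def)

lemma conj_mult: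
  fixes X Y P Q :: "'a::comm_ring_1 mat"
  assumes P: "P \<in> carrier_mat N N" and Q: "Q \<in> carrier_mat N N" and QP: "Q * P = 1\<^sub>m N"
    and X: "X \<in> carrier_mat N N" and Y: "Y \<in> carrier_mat N N"
  shows "P * (X * Y) * Q = (P * X * Q) * (P * Y * Q)"
proof -
  have "(P * X * Q) * (P * Y * Q) = P * X * ((Q * P) * (Y * Q))"
    using P Q X Y by (simp add: assoc_mult_mat[of _ N N _ N _ N])
  also have "\<dots> = P * (X * Y) * Q" using P Q X Y QP by (simp add: assoc_mult_mat[of _ N N _ N _ N])
  finally show ?thesis by simp
qed

lemma conj_one:
  fixes P Q :: "'a::comm_ring_1 mat"
  assumes P: "P \<in> carrier_mat N N" and Q: "Q \<in> carrier_mat N N" and QP: "P * Q = 1\<^sub>m N"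
  shows "P * 1\<^sub>m N * Q = 1\<^sub>m N"
  using P Q QP by (metis right_mult_one_mat)

lemma EO_conj:
  fixes phis :: "'a::comm_ring_1 mat"
  assumes phis: "phis \<in> carrier_mat n n" and phi': "phi' = transpose_mat e * phis * e"
    and e: "e \<in> carrier_mat n n" and ei: "ei \<in> carrier_mat n n"
    and inv: "ei * e = 1\<^sub>m n" and inv2: "e * ei = 1\<^sub>m n"
    and M: "M \<in> EO n m phis"
  shows "bdiag_id n m ei * M * bdiag_id n m e \<in> EO n m phi'"
  using M
proof (induction rule: EO.induct)
  case EO_one
  have "bdiag_id n m ei * 1\<^sub>m (n + 2*m) * bdiag_id n m e = 1\<^sub>m (n + 2*m)"
    using D_carrier[OF ei, of m] D_carrier[OF e, of m] D_mult[OF ei e, of m] inv D_one by simp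
  then show ?case by (simp add: EO.EO_one)
next
  case (EO_gen M)
  then show ?case using gen_conj[OF phis phi' e ei inv inv2] EO.EO_gen by blast
next
  case (EO_mult M N)
  have "bdiag_id n m ei * (M * N) * bdiag_id n m e =
      (bdiag_id n m ei * M * bdiag_id n m e) * (bdiag_id n m ei * N * bdiag_id n m e)"
    by (rule conj_mult[OF D_carrier[OF ei] D_carrier[OF e] _ EO_carrier[OF EO_mult(1)] EO_carrier[OF EO_mult(2)]])
      (simp add: D_mult[OF e ei] inv2 D_one)
  then show ?case using EO_mult EO.EO_mult by metis
next
  case (EO_inv M N)
  let ?P = "bdiag_id n m ei" and ?Q = "bdiag_id n m e" and ?K = "n + 2*m"
  have QP: "?Q * ?P = 1\<^sub>m ?K" by (simp add: D_mult[OF e ei] inv2 D_one)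
  have PQ: "?P * ?Q = 1\<^sub>m ?K" by (simp add: D_mult[OF ei e] inv D_one)
  note Mc = EO_carrier[OF EO_inv(1)]
  have 1: "(?P * M * ?Q) * (?P * N * ?Q) = 1\<^sub>m ?K"
    using conj_mult[OF D_carrier[OF ei] D_carrier[OF e] QP Mc EO_inv(2)] EO_inv(3)
      conj_one[OF D_carrier[OF ei] D_carrier[OF e] PQ] by simp
  have 2: "(?P * N * ?Q) * (?P * M * ?Q) = 1\<^sub>m ?K"
    using conj_mult[OF D_carrier[OF ei] D_carrier[OF e] QP EO_inv(2) Mc] EO_inv(4)
      conj_one[OF D_carrier[OF ei] D_carrier[OF e] PQ] by simp
  have 3: "?P * N * ?Q \<in> carrier_mat ?K ?K"
    using D_carrier[OF ei] D_carrier[OF e] EO_inv(2) by (meson mult_carrier_mat)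
  show ?case by (rule EO.EO_inv[OF EO_inv(5) 3 1 2])
qed


theorem mainTheorem13:
  fixes n m :: nat
    and phi' phis eps eps_inv :: "'a::comm_ring_1 mat"
  assumes two_inv: "\<exists>h::'a. 2 * h = 1"
    and "inv_sym_mat n phi'" and "inv_sym_mat n phis"
    and "eps \<in> carrier_mat n n" and "eps_inv \<in> carrier_mat n n"
    and "eps * eps_inv = 1\<^sub>m n" and "eps_inv * eps = 1\<^sub>m n"
    and "phi' = transpose_mat eps * phis * eps"
    and "m \<ge> 1"
  shows "EO n m phi' = {bdiag_id n m eps_inv * M * bdiag_id n m eps | M. M \<in> EO n m phis}"
proof -
  have phis: "phis \<in> carrier_mat n n" and phic: "phi' \<in> carrier_mat n n"
    using assms(2,3) by (auto simp: inv_sym_mat_def)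
  note e = assms(4) and ei = assms(5) and inv2 = assms(6) and inv = assms(7) and phiEq = assms(8)
  have phisb: "phis = transpose_mat eps_inv * phi' * eps_inv"
  proof -
    have "transpose_mat eps_inv * phi' * eps_inv
        = (transpose_mat eps_inv * transpose_mat eps) * phis * (eps * eps_inv)"
      unfolding phiEq using e ei phis
      by (simp add: assoc_mult_mat[of _ n n _ n _ n])
    also have "transpose_mat eps_inv * transpose_mat eps = transpose_mat (eps * eps_inv)"
      using e ei by (simp add: transpose_mult)
    finally show ?thesis using inv2 phis by simp
  qed
  let ?P = "bdiag_id n m eps_inv" and ?Q = "bdiag_id n m eps" and ?K = "n + 2*m"
  have QP: "?Q * ?P = 1\<^sub>m ?K" by (simp add: D_mult[OF e ei] inv2 D_one)
  have PQ: "?P * ?Q = 1\<^sub>m ?K" by (simp add: D_mult[OF ei e] inv D_one)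
  show ?thesis
  proof (intro equalityI subsetI)
    fix M assume M: "M \<in> EO n m phi'"
    have Mc: "M \<in> carrier_mat ?K ?K" by (rule EO_carrier[OF M])
    have 1: "?Q * M * ?P \<in> EO n m phis"
      by (rule EO_conj[OF phic phisb ei e inv2 inv M])
    have "?P * (?Q * M * ?P) * ?Q = (?P * ?Q) * M * (?P * ?Q)"
      using D_carrier[OF e, of m] D_carrier[OF ei, of m] Mc
      by (simp add: assoc_mult_mat[of _ ?K ?K _ ?K _ ?K])
    also have "\<dots> = M" using PQ Mc by simp
    finally have "M = ?P * (?Q * M * ?P) * ?Q" by simp
    then show "M \<in> {?P * M * ?Q | M. M \<in> EO n m phis}" using 1 by blast
  next
    fix X assume "X \<in> {?P * M * ?Q | M. M \<in> EO n m phis}"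
    then obtain M where X: "X = ?P * M * ?Q" and M: "M \<in> EO n m phis" by blast
    show "X \<in> EO n m phi'" unfolding X by (rule EO_conj[OF phis phiEq e ei inv inv2 M])
  qed
qed

end
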